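(* The Skolem Conjecture holds if and only if the following statement (S') holds: (S') Let $b$ be a nonzero integer and let $\mathbf u=\langle u_n\rangle_{n\in\mathbb Z}$ be a simple rational LRBS taking values in $\mathbb Z[\frac1b]$. Then $\mathbf u$ has no integer zero if and only if there exist an integer $N\ge1$ and primes $p_1,\dots,p_t$ coprime to $b$ with the following property: for every $\ell\in\{0,\dots,N-1\}$ there is an $i$ such that the sequence $\langle u_{Nn+\ell}\rangle_{n\in\mathbb Z}$ has no $p_i$-adic zero.
   Context: A rational linear recurrent bi-sequence (LRBS) is a bi-infinite sequence $\langle u_n\rangle_{n\in\mathbb Z}$ of rationals satisfying $u_{n+d}=a_{d-1}u_{n+d-1}+\dots+a_0u_n$ for all $n\in\mathbb Z$, with rational $a_i$ and $a_0\neq0$. It is simple if the characteristic polynomial of its minimal-order recurrence has no repeated roots. An integer zero is an $n\in\mathbb Z$ with $u_n=0$. For a prime $p$ not dividing $b$ and a sequence $\langle w_n\rangle_{n\in\mathbb Z}$ with values in $\mathbb Z[\frac1b]$, a $p$-adic zero of $\mathbf w$ is an $x\in\mathbb Z_p$ for which there exist integers $n_1,n_2,\dots$ with $v_p(w_{n_r})\ge r$ and $n_r\equiv x \pmod{p^r\mathbb Z_p}$ for all $r\ge1$. Skolem Conjecture: for every nonzero integer $b$ and every simple rational LRBS $\mathbf u$ with values in $\mathbb Z[\frac1b]$, $\mathbf u$ has no integer zero if and only if there is an integer $m\ge2$ with $\gcd(b,m)=1$ such that $u_n\not\equiv0\pmod m$ for all $n\in\mathbb Z$. *)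

theory Defs
  imports Complex_Main "HOL-Computational_Algebra.Polynomial" "HOL-Number_Theory.Cong"
begin

definition lin_rec :: "(int \<Rightarrow> rat) \<Rightarrow> nat \<Rightarrow> (nat \<Rightarrow> rat) \<Rightarrow> bool" where
  "lin_rec u d a \<longleftrightarrow> (\<forall>n::int. u (n + int d) = (\<Sum>i<d. a i * u (n + int i)))"

definition char_poly :: "nat \<Rightarrow> (nat \<Rightarrow> rat) \<Rightarrow> rat poly" where
  "char_poly d a = monom 1 d - (\<Sum>i<d. monom (a i) i)"

definition is_LRBS :: "(int \<Rightarrow> rat) \<Rightarrow> bool" where
  "is_LRBS u \<longleftrightarrow> (\<exists>d a. 0 < d \<and> a 0 \<noteq> 0 \<and> lin_rec u d a)"

definition simple_LRBS :: "(int \<Rightarrow> rat) \<Rightarrow> bool" where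
  "simple_LRBS u \<longleftrightarrow> is_LRBS u \<and>
     (\<exists>d a. lin_rec u d a \<and> (\<forall>d' a'. lin_rec u d' a' \<longrightarrow> d \<le> d') \<and>
        rsquarefree (map_poly (\<lambda>q. of_rat q :: complex) (char_poly d a)))"

definition values_in_Zb :: "int \<Rightarrow> (int \<Rightarrow> rat) \<Rightarrow> bool" where
  "values_in_Zb b u \<longleftrightarrow> (\<forall>n. \<exists>(x::int) (k::nat). u n = of_int x / of_int b ^ k)"

definition zero_mod :: "int \<Rightarrow> rat \<Rightarrow> bool" where
  "zero_mod m q \<longleftrightarrow> (\<exists>x y::int. coprime y m \<and> q = of_int x / of_int y \<and> m dvd x)"

definition vp_ge :: "nat \<Rightarrow> rat \<Rightarrow> nat \<Rightarrow> bool" where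
  "vp_ge p q r \<longleftrightarrow> zero_mod (int p ^ r) q"

(* p-adic integers represented as compatible sequences of residues c r \<in> {0..<p^r}
   (the inverse limit of Z/p^r Z); x \<equiv> c r (mod p^r Z_p) *)
definition padic_int :: "nat \<Rightarrow> (nat \<Rightarrow> int) \<Rightarrow> bool" where
  "padic_int p c \<longleftrightarrow> (\<forall>r. 0 \<le> c r \<and> c r < int p ^ r \<and> [c (Suc r) = c r] (mod int p ^ r))"

definition is_padic_zero :: "nat \<Rightarrow> (int \<Rightarrow> rat) \<Rightarrow> (nat \<Rightarrow> int) \<Rightarrow> bool" where
  "is_padic_zero p w c \<longleftrightarrow> padic_int p c \<and>
     (\<exists>ns :: nat \<Rightarrow> int. \<forall>r\<ge>1. vp_ge p (w (ns r)) r \<and> [ns r = c r] (mod int p ^ r))"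

definition has_padic_zero :: "nat \<Rightarrow> (int \<Rightarrow> rat) \<Rightarrow> bool" where
  "has_padic_zero p w \<longleftrightarrow> (\<exists>c. is_padic_zero p w c)"

definition Skolem_Conjecture :: bool where
  "Skolem_Conjecture \<longleftrightarrow>
    (\<forall>(b::int) (u::int \<Rightarrow> rat). b \<noteq> 0 \<longrightarrow> simple_LRBS u \<longrightarrow> values_in_Zb b u \<longrightarrow>
      ((\<forall>n. u n \<noteq> 0) \<longleftrightarrow> (\<exists>m::int. m \<ge> 2 \<and> coprime b m \<and> (\<forall>n. \<not> zero_mod m (u n)))))"

definition S' :: bool where
  "S' \<longleftrightarrow>
    (\<forall>(b::int) (u::int \<Rightarrow> rat). b \<noteq> 0 \<longrightarrow> simple_LRBS u \<longrightarrow> values_in_Zb b u \<longrightarrow>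
      ((\<forall>n. u n \<noteq> 0) \<longleftrightarrow>
        (\<exists>(N::nat) (ps::nat list). N \<ge> 1 \<and> (\<forall>p\<in>set ps. prime p \<and> coprime (int p) b) \<and>
           (\<forall>l<N. \<exists>p\<in>set ps. \<not> has_padic_zero p (\<lambda>n. u (int N * n + int l))))))"

end

theory Submission
  imports Defs
begin


definition Aset :: "int \<Rightarrow> rat set" where
  "Aset m = {q. \<exists>x y::int. coprime y m \<and> q = of_int x / of_int y}"

lemma A_int[simp]: "of_int z \<in> Aset m"
  unfolding Aset_def by (rule CollectI, rule exI[of _ z], rule exI[of _ 1]) simp

lemma A_0[simp]: "0 \<in> Aset m" using A_int[of 0 m] by simp

lemma A_uminus: "q \<in> Aset m \<Longrightarrow> - q \<in> Aset m"
proof -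
  assume "q \<in> Aset m"
  then obtain x y where c: "coprime y m" "q = of_int x / of_int y" unfolding Aset_def by auto
  then have "- q = of_int (-x) / of_int y" by simp
  then show ?thesis using c unfolding Aset_def by blast
qed

lemma A_mult: "q \<in> Aset m \<Longrightarrow> q' \<in> Aset m \<Longrightarrow> q * q' \<in> Aset m"
proof -
  assume "q \<in> Aset m" "q' \<in> Aset m"
  then obtain x y x' y' where "coprime y m" "q = of_int x / of_int y" "coprime y' m" "q' = of_int x' / of_int y'"
    unfolding Aset_def by auto
  then have "q * q' = of_int (x*x') / of_int (y*y')" "coprime (y*y') m" by simp_all
  then show ?thesis unfolding Aset_def by blast
qed

lemma A_add: "q \<in> Aset m \<Longrightarrow> q' \<in> Aset m \<Longrightarrow> q + q' \<in> Aset m"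
proof -
  assume "q \<in> Aset m" "q' \<in> Aset m"
  then obtain x y x' y' where c: "coprime y m" "q = of_int x / of_int y" "coprime y' m" "q' = of_int x' / of_int y'"
    unfolding Aset_def by auto
  show ?thesis
  proof (cases "y = 0 \<or> y' = 0")
    case True
    then have "q = 0 \<or> q' = 0" using c by auto
    then show ?thesis using \<open>q \<in> Aset m\<close> \<open>q' \<in> Aset m\<close> by auto
  next
    case False
    then have "q + q' = of_int (x*y' + x'*y) / of_int (y*y')" using c by (simp add: field_simps)
    moreover have "coprime (y*y') m" using c by simp
    ultimately show ?thesis unfolding Aset_def by blast
  qed
qed

lemma A_diff: "q \<in> Aset m \<Longrightarrow> q' \<in> Aset m \<Longrightarrow> q - q' \<in> Aset m"
  using A_add[OF _ A_uminus] by fastforce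

lemma zero_mod_iff: "zero_mod m q \<longleftrightarrow> (\<exists>z\<in>Aset m. q = of_int m * z)"
proof
  assume "zero_mod m q"
  then obtain x y where "coprime y m" "q = of_int x / of_int y" "m dvd x" unfolding zero_mod_def by auto
  then obtain k where "x = m * k" by auto
  then show "\<exists>z\<in>Aset m. q = of_int m * z" using \<open>coprime y m\<close> \<open>q = _\<close> unfolding Aset_def
    by (intro bexI[of _ "of_int k / of_int y"]) auto
next
  assume "\<exists>z\<in>Aset m. q = of_int m * z"
  then obtain z where "z \<in> Aset m" "q = of_int m * z" by auto
  moreover then obtain x y where "coprime y m" "z = of_int x / of_int y" unfolding Aset_def by auto
  ultimately show "zero_mod m q" unfolding zero_mod_def
    by (intro exI[of _ "m*x"] exI[of _ y]) auto
qed

lemma zero_mod_0[simp]: "zero_mod m 0"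
  unfolding zero_mod_iff by (intro bexI[of _ 0]) auto

lemma zero_mod_add: "zero_mod m q \<Longrightarrow> zero_mod m q' \<Longrightarrow> zero_mod m (q + q')"
  unfolding zero_mod_iff by (auto intro!: bexI[OF _ A_add] simp: distrib_left)

lemma zero_mod_diff: "zero_mod m q \<Longrightarrow> zero_mod m q' \<Longrightarrow> zero_mod m (q - q')"
  unfolding zero_mod_iff by (auto intro!: bexI[OF _ A_diff] simp: right_diff_distrib)

lemma zero_mod_dvd: "zero_mod m q \<Longrightarrow> d dvd m \<Longrightarrow> zero_mod d q"
proof -
  assume "zero_mod m q" "d dvd m"
  then obtain x y where "coprime y m" "q = of_int x / of_int y" "m dvd x" unfolding zero_mod_def by auto
  moreover have "coprime y d" using \<open>coprime y m\<close> \<open>d dvd m\<close> coprime_divisors dvd_refl by blast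
  moreover have "d dvd x" using \<open>m dvd x\<close> \<open>d dvd m\<close> by (rule dvd_trans[rotated])
  ultimately show ?thesis unfolding zero_mod_def by blast
qed

lemma zero_mod_rep:
  assumes "zero_mod d q" "q = of_int x / of_int y" "coprime y d" "y \<noteq> 0"
  shows "d dvd x"
proof -
  obtain x' y' where c: "coprime y' d" "q = of_int x' / of_int y'" "d dvd x'" using assms(1) unfolding zero_mod_def by auto
  show ?thesis
  proof (cases "y' = 0")
    case True then have "x = 0" using c assms by simp
    then show ?thesis by simp
  next
    case False
    then have "of_int x * of_int y' = (of_int x' * of_int y :: rat)" using c assms by (simp add: field_simps)
    then have "x * y' = x' * y" by (metis of_int_eq_iff of_int_mult)
    then have "d dvd x * y'" using c by simp
    then show ?thesis using c coprime_commute coprime_dvd_mult_left_iff by metis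
  qed
qed



lemma principal:
  assumes z: "(\<lambda>x. 0) \<in> S"
    and ad: "\<forall>w1\<in>S. \<forall>w2\<in>S. (\<lambda>x. w1 x + w2 x) \<in> S"
    and sm: "\<forall>c\<in>Aset m. \<forall>w\<in>S. (\<lambda>x. c * w x) \<in> S"
    and vals: "\<forall>w\<in>S. \<forall>x. w x \<in> Aset m"
  shows "\<exists>s0\<in>S. \<forall>w\<in>S. \<exists>a\<in>Aset m. w t = a * s0 t"
proof (cases "\<forall>w\<in>S. w t = 0")
  case True
  then show ?thesis using z by (intro bexI[of _ "\<lambda>x. 0"] ballI bexI[of _ 0]) auto
next
  case False
  have intval: "\<exists>w'\<in>S. w' t = of_int x" if "w \<in> S" "w t = of_int x / of_int y" "y \<noteq> 0" for w x y
  proof -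
    have "(\<lambda>x. of_int y * w x) \<in> S" using sm that by auto
    moreover have "of_int y * w t = of_int x" using that by simp
    ultimately show ?thesis by force
  qed
  define Z where "Z = {z::nat. z > 0 \<and> (\<exists>w\<in>S. w t = of_nat z)}"
  obtain w0 where w0: "w0 \<in> S" "w0 t \<noteq> 0" using False by auto
  then obtain x y where xy: "coprime y m" "w0 t = of_int x / of_int y" using vals unfolding Aset_def by blast
  then have "y \<noteq> 0" using w0 by auto
  then obtain w1 where w1: "w1 \<in> S" "w1 t = of_int x" using intval w0 xy by blast
  have "x \<noteq> 0" using xy w0 by auto
  have "of_int (-1) \<in> Aset m" by (rule A_int)
  then have "(\<lambda>x. of_int (-1) * w1 x) \<in> S" using sm w1(1) by blast
  then have neg: "(\<lambda>v. - w1 v) \<in> S" by simp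
  have "\<exists>z. z \<in> Z"
  proof (cases "x > 0")
    case True
    then have "nat x \<in> Z" unfolding Z_def using w1 by auto
    then show ?thesis by blast
  next
    case False
    then have "nat (-x) \<in> Z" unfolding Z_def using w1 neg \<open>x \<noteq> 0\<close> by (auto intro!: bexI[of _ "\<lambda>v. - w1 v"])
    then show ?thesis by blast
  qed
  then obtain z0 where "z0 \<in> Z" by blast
  define gn where "gn = (LEAST z. z \<in> Z)"
  have gZ: "gn \<in> Z" unfolding gn_def using \<open>z0 \<in> Z\<close> by (rule LeastI)
  have gmin: "\<And>z. z \<in> Z \<Longrightarrow> gn \<le> z" unfolding gn_def by (rule Least_le)
  define g where "g = int gn"
  obtain s0 where s0: "s0 \<in> S" "s0 t = of_int g" "g > 0" using gZ unfolding Z_def g_def by auto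
  show ?thesis
  proof (intro bexI[OF _ s0(1)] ballI)
    fix w assume "w \<in> S"
    show "\<exists>a\<in>Aset m. w t = a * s0 t"
    proof (cases "w t = 0")
      case True then show ?thesis by (intro bexI[of _ 0]) auto
    next
      case False
      obtain x y where xy: "coprime y m" "w t = of_int x / of_int y" using vals \<open>w \<in> S\<close> unfolding Aset_def by blast
      then have "y \<noteq> 0" using False by auto
      then obtain w1 where w1: "w1 \<in> S" "w1 t = of_int x" using intval \<open>w \<in> S\<close> xy by blast
      have "(\<lambda>v. of_int (- (x div g)) * s0 v) \<in> S" using sm s0(1) A_int[of "- (x div g)" m] by blast
      then have "(\<lambda>v. w1 v + of_int (- (x div g)) * s0 v) \<in> S" using ad w1 by auto
      moreover have "w1 t + of_int (- (x div g)) * s0 t = of_int (x mod g)"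
        using w1 s0 by (simp add: minus_div_mult_eq_mod[symmetric] algebra_simps)
      ultimately have "x mod g > 0 \<Longrightarrow> nat (x mod g) \<in> Z" unfolding Z_def by force
      moreover have "x mod g < g" "x mod g \<ge> 0" using s0 by auto
      ultimately have "x mod g = 0" using gmin unfolding g_def by force
      then obtain k where "x = g * k" by auto
      then have "w t = of_int k / of_int y * s0 t" using xy s0 by simp
      moreover have "of_int k / of_int y \<in> Aset m" using xy unfolding Aset_def by blast
      ultimately show ?thesis by blast
    qed
  qed
qed

lemma fg:
  assumes "finite F"
    and "(\<lambda>x. 0) \<in> S"
    and "\<forall>w1\<in>S. \<forall>w2\<in>S. (\<lambda>x. w1 x + w2 x) \<in> S"
    and "\<forall>c\<in>Aset m. \<forall>w\<in>S. (\<lambda>x. c * w x) \<in> S"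
    and "\<forall>w\<in>S. \<forall>x. w x \<in> Aset m"
    and "\<forall>w\<in>S. (\<forall>x\<in>F. w x = 0) \<longrightarrow> w = (\<lambda>x. 0)"
  shows "\<exists>(n::nat) g. (\<forall>i<n. g i \<in> S) \<and> (\<forall>w\<in>S. \<exists>c. (\<forall>i<n. c i \<in> Aset m) \<and> w = (\<lambda>x. \<Sum>i<n. c i * g i x))"
  using assms
proof (induction F arbitrary: S rule: finite_induct)
  case empty
  then have "\<forall>w\<in>S. w = (\<lambda>x. 0)" by simp
  show ?case
    apply (rule exI[of _ "0::nat"])
    using \<open>\<forall>w\<in>S. w = (\<lambda>x. 0)\<close> by auto
next
  case (insert t F S)
  obtain s0 where s0: "s0 \<in> S" "\<forall>w\<in>S. \<exists>a\<in>Aset m. w t = a * s0 t"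
    using principal[OF insert.prems(1-4)] by blast
  define S' where "S' = {w\<in>S. w t = 0}"
  have "\<exists>(n::nat) g. (\<forall>i<n. g i \<in> S') \<and> (\<forall>w\<in>S'. \<exists>c. (\<forall>i<n. c i \<in> Aset m) \<and> w = (\<lambda>x. \<Sum>i<n. c i * g i x))"
  proof (rule insert.IH)
    show "(\<lambda>x. 0) \<in> S'" using insert.prems(1) unfolding S'_def by simp
    show "\<forall>w1\<in>S'. \<forall>w2\<in>S'. (\<lambda>x. w1 x + w2 x) \<in> S'"
    proof (intro ballI)
      fix w1 w2 assume "w1 \<in> S'" "w2 \<in> S'"
      then show "(\<lambda>x. w1 x + w2 x) \<in> S'" using insert.prems(2) unfolding S'_def by simp
    qed
    show "\<forall>c\<in>Aset m. \<forall>w\<in>S'. (\<lambda>x. c * w x) \<in> S'"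
    proof (intro ballI)
      fix c w assume "c \<in> Aset m" "w \<in> S'"
      then show "(\<lambda>x. c * w x) \<in> S'" using insert.prems(3) unfolding S'_def by simp
    qed
    show "\<forall>w\<in>S'. \<forall>x. w x \<in> Aset m" using insert.prems(4) unfolding S'_def by simp
    show "\<forall>w\<in>S'. (\<forall>x\<in>F. w x = 0) \<longrightarrow> w = (\<lambda>x. 0)"
    proof (intro ballI impI)
      fix w assume "w \<in> S'" "\<forall>x\<in>F. w x = 0"
      then have "w \<in> S" "\<forall>x\<in>insert t F. w x = 0" unfolding S'_def by auto
      then show "w = (\<lambda>x. 0)" using insert.prems(5) by blast
    qed
  qed
  then obtain n :: nat and g where g: "\<forall>i<n. g i \<in> S'" "\<forall>w\<in>S'. \<exists>c. (\<forall>i<n. c i \<in> Aset m) \<and> w = (\<lambda>x. \<Sum>i<n. c i * g i x)"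
    by blast
  define g' where "g' = (\<lambda>i. if i < n then g i else s0)"
  show ?case
  proof (intro exI[of _ "Suc n"] exI[of _ g'] conjI ballI allI impI)
    fix i assume "i < Suc n" then show "g' i \<in> S" using g s0 unfolding g'_def S'_def by auto
  next
    fix w assume "w \<in> S"
    then obtain a where a: "a \<in> Aset m" "w t = a * s0 t" using s0 by blast
    have negs: "(\<lambda>x. (- a) * s0 x) \<in> S" using insert.prems(3) s0(1) A_uminus[OF a(1)] by blast
    have inS: "(\<lambda>x. w x + (- a) * s0 x) \<in> S" by (rule insert.prems(2)[rule_format, OF \<open>w \<in> S\<close> negs])
    have val: "(\<lambda>x. w x + (- a) * s0 x) t = 0" using a by simp
    have "(\<lambda>x. w x + (- a) * s0 x) \<in> S'" unfolding S'_def using inS val by blast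
    then obtain c where c: "\<forall>i<n. c i \<in> Aset m" "(\<lambda>x. w x + (- a) * s0 x) = (\<lambda>x. \<Sum>i<n. c i * g i x)"
      using g by blast
    define c' where "c' = (\<lambda>i. if i < n then c i else a)"
    have "w = (\<lambda>x. \<Sum>i<Suc n. c' i * g' i x)"
    proof
      fix x
      have "w x + (- a) * s0 x = (\<Sum>i<n. c i * g i x)" using c(2) by meson
      moreover have "(\<Sum>i<n. c' i * g' i x) = (\<Sum>i<n. c i * g i x)"
        unfolding c'_def g'_def by (rule sum.cong) auto
      ultimately show "w x = (\<Sum>i<Suc n. c' i * g' i x)" unfolding c'_def g'_def by simp
    qed
    moreover have "\<forall>i<Suc n. c' i \<in> Aset m" using c a unfolding c'_def by auto
    ultimately show "\<exists>c. (\<forall>i<Suc n. c i \<in> Aset m) \<and> w = (\<lambda>x. \<Sum>i<Suc n. c i * g' i x)" by blast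
  qed
qed



inductive_set Uset for u :: "int \<Rightarrow> rat" and m :: int where
  shift: "(\<lambda>x. u (x + k)) \<in> Uset u m"
| zero: "(\<lambda>x. 0) \<in> Uset u m"
| add: "w1 \<in> Uset u m \<Longrightarrow> w2 \<in> Uset u m \<Longrightarrow> (\<lambda>x. w1 x + w2 x) \<in> Uset u m"
| smult: "c \<in> Aset m \<Longrightarrow> w \<in> Uset u m \<Longrightarrow> (\<lambda>x. c * w x) \<in> Uset u m"

lemma U_vals: "w \<in> Uset u m \<Longrightarrow> \<forall>x. u x \<in> Aset m \<Longrightarrow> w x \<in> Aset m"
proof (induction w arbitrary: x rule: Uset.induct)
  case (add w1 w2) then show ?case using A_add by blast
next
  case (smult c w) then show ?case using A_mult by blast
qed auto

lemma U_rec: "w \<in> Uset u m \<Longrightarrow> lin_rec u d a \<Longrightarrow> lin_rec w d a"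
proof (induction w rule: Uset.induct)
  case (shift k)
  show ?case unfolding lin_rec_def
  proof
    fix n
    have "u ((n + k) + int d) = (\<Sum>i<d. a i * u ((n + k) + int i))" using shift by (simp add: lin_rec_def)
    then show "u (n + int d + k) = (\<Sum>i<d. a i * u (n + int i + k))" by (simp add: ac_simps)
  qed
next
  case zero then show ?case by (simp add: lin_rec_def)
next
  case (add w1 w2) then show ?case by (simp add: lin_rec_def sum.distrib algebra_simps)
next
  case (smult c w) then show ?case by (simp add: lin_rec_def sum_distrib_left algebra_simps)
qed

lemma U_shift: "w \<in> Uset u m \<Longrightarrow> (\<lambda>x. w (x + j)) \<in> Uset u m"
proof (induction w rule: Uset.induct)
  case (shift k)
  have "(\<lambda>x. u (x + (j + k))) \<in> Uset u m" by (rule Uset.shift)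
  then show ?case by (simp add: ac_simps)
next
  case zero then show ?case by (simp add: Uset.zero)
next
  case (add w1 w2) then show ?case using Uset.add by fastforce
next
  case (smult c w) then show ?case using Uset.smult by fastforce
qed

lemma U_sum: "(\<forall>i<(n::nat). g i \<in> Uset u m) \<Longrightarrow> (\<forall>i<n. c i \<in> Aset m) \<Longrightarrow> (\<lambda>x. \<Sum>i<n. c i * g i x) \<in> Uset u m"
proof (induction n)
  case 0 then show ?case using Uset.zero by simp
next
  case (Suc n)
  have "(\<lambda>x. \<Sum>i<n. c i * g i x) \<in> Uset u m" using Suc by simp
  moreover have "(\<lambda>x. c n * g n x) \<in> Uset u m" using Suc.prems by (simp add: Uset.smult)
  ultimately have "(\<lambda>x. (\<Sum>i<n. c i * g i x) + c n * g n x) \<in> Uset u m" by (rule Uset.add)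
  then show ?case by simp
qed

lemma rec_zero:
  assumes lr: "lin_rec w d a" and d: "0 < d" and a0: "a 0 \<noteq> 0"
    and z: "\<forall>i. 0 \<le> i \<and> i < int d \<longrightarrow> w i = 0"
  shows "w x = 0"
proof -
  obtain d' where dd: "d = Suc d'" using d by (cases d) auto
  have rec: "w (n + int d) = (\<Sum>i<d. a i * w (n + int i))" for n using lr by (simp add: lin_rec_def)
  define P where "P n \<longleftrightarrow> (\<forall>j<d. w (n + int j) = 0)" for n
  have "P n" for n
  proof (induction n rule: int_induct[where k=0])
    case base then show ?case unfolding P_def using z by auto
  next
    case (step1 n)
    show ?case unfolding P_def
    proof (intro allI impI)
      fix j assume "j < d"
      show "w (n + 1 + int j) = 0"
      proof (cases "Suc j < d")
        case True then show ?thesis using step1(2) unfolding P_def by (metis add.assoc add.commute of_nat_Suc)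
      next
        case False
        then have "int j + 1 = int d" using \<open>j < d\<close> by simp
        then have "n + 1 + int j = n + int d" by simp
        then have "w (n + 1 + int j) = w (n + int d)" by (rule arg_cong[where f=w])
        also have "\<dots> = (\<Sum>i<d. a i * w (n + int i))" by (rule rec)
        also have "\<dots> = 0" using step1(2) unfolding P_def by simp
        finally show ?thesis .
      qed
    qed
  next
    case (step2 n)
    show ?case unfolding P_def
    proof (intro allI impI)
      fix j assume "j < d"
      show "w (n - 1 + int j) = 0"
      proof (cases j)
        case (Suc j') then show ?thesis using step2(2) \<open>j < d\<close> unfolding P_def by simp
      next
        case 0
        have "w (n - 1 + int d) = (\<Sum>i<d. a i * w (n - 1 + int i))" by (rule rec)
        also have "\<dots> = a 0 * w (n - 1) + (\<Sum>i<d'. a (Suc i) * w (n - 1 + int (Suc i)))"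
          unfolding dd sum.lessThan_Suc_shift by simp
        also have "(\<Sum>i<d'. a (Suc i) * w (n - 1 + int (Suc i))) = 0"
          using step2(2) unfolding P_def dd by simp
        finally have "w (n - 1 + int d) = a 0 * w (n - 1)" by simp
        moreover have "w (n - 1 + int d) = 0" using step2(2) unfolding P_def dd by simp
        ultimately show ?thesis using a0 0 by simp
      qed
    qed
  qed
  then show ?thesis unfolding P_def using d by (metis add.right_neutral of_nat_0)
qed



lemma residue:
  assumes "c \<in> Aset m" "m > 0"
  shows "\<exists>r z. 0 \<le> r \<and> r < m \<and> z \<in> Aset m \<and> c - of_int r = of_int m * z"
proof -
  obtain x y where xy: "coprime y m" "c = of_int x / of_int y" using assms(1) unfolding Aset_def by auto
  obtain y' where y': "[y * y' = 1] (mod m)" using xy(1) coprime_iff_invertible_int by blast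
  define r where "r = (x * y') mod m"
  show ?thesis
  proof (cases "y = 0")
    case True
    then have "c = 0" using xy by simp
    then show ?thesis using assms(2) by (intro exI[of _ 0] exI[of _ 0]) auto
  next
    case False
    then have "y \<noteq> 0" by simp
  have "[r * y = x * y' * y] (mod m)" unfolding r_def by (simp add: cong_def mod_mult_left_eq)
  also have "[x * y' * y = x * 1] (mod m)" using y' by (metis cong_scalar_left mult.assoc mult.commute)
  finally have "[x = r * y] (mod m)" by (simp add: cong_sym)
  then have "m dvd x - r * y" by (simp add: cong_iff_dvd_diff)
  then obtain k where k: "x - r * y = m * k" by auto
  have "c - of_int r = of_int (x - r * y) / of_int y" using xy \<open>y \<noteq> 0\<close> by (simp add: field_simps)
  also have "\<dots> = of_int m * (of_int k / of_int y)" using k by simp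
  finally have "c - of_int r = of_int m * (of_int k / of_int y)" .
  moreover have "of_int k / of_int y \<in> Aset m" using xy(1) unfolding Aset_def by blast
  moreover have "0 \<le> r" "r < m" unfolding r_def using assms(2) by auto
  ultimately show ?thesis by blast
  qed
qed

lemma periodic:
  assumes lr: "lin_rec u d a" and d: "0 < d" and a0: "a 0 \<noteq> 0"
    and vals: "\<forall>x. u x \<in> Aset m" and m: "m > 0"
  shows "\<exists>P::nat. P > 0 \<and> (\<forall>x. zero_mod m (u (x + int P) - u x))"
proof -
  let ?U = "Uset u m"
  have "\<exists>(n::nat) g. (\<forall>i<n. g i \<in> ?U) \<and> (\<forall>w\<in>?U. \<exists>c. (\<forall>i<n. c i \<in> Aset m) \<and> w = (\<lambda>x. \<Sum>i<n. c i * g i x))"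
  proof (rule fg[where F="{0..<int d}"])
    show "finite {0..<int d}" by simp
    show "(\<lambda>x. 0) \<in> ?U" by (rule Uset.zero)
    show "\<forall>w1\<in>?U. \<forall>w2\<in>?U. (\<lambda>x. w1 x + w2 x) \<in> ?U" by (blast intro: Uset.add)
    show "\<forall>c\<in>Aset m. \<forall>w\<in>?U. (\<lambda>x. c * w x) \<in> ?U" by (blast intro: Uset.smult)
    show "\<forall>w\<in>?U. \<forall>x. w x \<in> Aset m" using U_vals vals by blast
    show "\<forall>w\<in>?U. (\<forall>x\<in>{0..<int d}. w x = 0) \<longrightarrow> w = (\<lambda>x. 0)"
    proof (intro ballI impI)
      fix w assume "w \<in> ?U" "\<forall>x\<in>{0..<int d}. w x = 0"
      then have "\<forall>i. 0 \<le> i \<and> i < int d \<longrightarrow> w i = 0" by simp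
      then have "\<And>x. w x = 0" using rec_zero[OF U_rec[OF \<open>w \<in> ?U\<close> lr] d a0] by blast
      then show "w = (\<lambda>x. 0)" by (rule ext)
    qed
  qed
  then obtain n :: nat and g where g: "\<forall>i<n. g i \<in> ?U"
    "\<forall>w\<in>?U. \<exists>c. (\<forall>i<n. c i \<in> Aset m) \<and> w = (\<lambda>x. \<Sum>i<n. c i * g i x)" by blast
  define Q where "Q k L \<longleftrightarrow> set L \<subseteq> {0..<m} \<and> length L = n \<and>
      (\<exists>h\<in>?U. \<forall>x. u (x + int k) - (\<Sum>i<n. of_int (L ! i) * g i x) = of_int m * h x)" for k L
  have exQ: "\<exists>L. Q k L" for k
  proof -
    have "(\<lambda>x. u (x + int k)) \<in> ?U" by (rule Uset.shift)
    then obtain c where c: "\<forall>i<n. c i \<in> Aset m" "(\<lambda>x. u (x + int k)) = (\<lambda>x. \<Sum>i<n. c i * g i x)"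
      using g(2) by blast
    have "\<forall>i. \<exists>p. i < n \<longrightarrow> (0 \<le> fst p \<and> fst p < m \<and> snd p \<in> Aset m \<and> c i - of_int (fst p) = of_int m * snd p)"
    proof (intro allI)
      fix i show "\<exists>p. i < n \<longrightarrow> (0 \<le> fst p \<and> fst p < m \<and> snd p \<in> Aset m \<and> c i - of_int (fst p) = of_int m * snd p)"
      proof (cases "i < n")
        case True
        then obtain r z where "0 \<le> r \<and> r < m \<and> z \<in> Aset m \<and> c i - of_int r = of_int m * z"
          using residue[OF c(1)[rule_format, OF True] m] by blast
        then show ?thesis by (intro exI[of _ "(r,z)"]) simp
      next
        case False then show ?thesis by simp
      qed
    qed
    from choice[OF this] obtain f where f0: "\<forall>i. i < n \<longrightarrow> 0 \<le> fst (f i) \<and> fst (f i) < m \<and> snd (f i) \<in> Aset m \<and> c i - of_int (fst (f i)) = of_int m * snd (f i)"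
      by (rule exE)
    note f = f0[rule_format]
    define L where "L = map (\<lambda>i. fst (f i)) [0..<n]"
    define h where "h = (\<lambda>x. \<Sum>i<n. snd (f i) * g i x)"
    have "h \<in> ?U" unfolding h_def by (rule U_sum[OF g(1)]) (use f in blast)
    moreover have "u (x + int k) - (\<Sum>i<n. of_int (L ! i) * g i x) = of_int m * h x" for x
    proof -
      have "u (x + int k) = (\<Sum>i<n. c i * g i x)" using c(2) by meson
      then have "u (x + int k) - (\<Sum>i<n. of_int (L ! i) * g i x) = (\<Sum>i<n. (c i - of_int (L ! i)) * g i x)"
        by (simp add: sum_subtractf left_diff_distrib)
      also have "\<dots> = (\<Sum>i<n. of_int m * (snd (f i) * g i x))"
        by (rule sum.cong) (auto simp: L_def f)
      also have "\<dots> = of_int m * h x" unfolding h_def by (simp add: sum_distrib_left)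
      finally show ?thesis .
    qed
    moreover have "set L \<subseteq> {0..<m}" "length L = n" unfolding L_def using f by auto
    ultimately show ?thesis unfolding Q_def by blast
  qed
  define R where "R k = (SOME L. Q k L)" for k
  have QR: "Q k (R k)" for k unfolding R_def using exQ by (rule someI_ex)
  have "range R \<subseteq> {L. set L \<subseteq> {0..<m} \<and> length L = n}" using QR unfolding Q_def by auto
  then have "finite (range R)" by (rule finite_subset) (rule finite_lists_length_eq, simp)
  then have "\<not> inj R" using finite_imageD infinite_UNIV_nat by blast
  then obtain k1 k2 where k12: "k1 \<noteq> k2" "R k1 = R k2" unfolding inj_def by blast
  have "\<exists>k1 k2. k1 < k2 \<and> R k1 = R k2"
  proof (cases "k1 < k2")
    case True then show ?thesis using k12 by blast
  next
    case False then have "k2 < k1" using k12 by simp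
    then show ?thesis using k12 by metis
  qed
  then obtain k1 k2 where k: "k1 < k2" "R k1 = R k2" by blast
  obtain h1 where h1: "h1 \<in> ?U" "\<forall>x. u (x + int k1) - (\<Sum>i<n. of_int (R k1 ! i) * g i x) = of_int m * h1 x"
    using QR[of k1] unfolding Q_def by blast
  obtain h2 where h2: "h2 \<in> ?U" "\<forall>x. u (x + int k2) - (\<Sum>i<n. of_int (R k1 ! i) * g i x) = of_int m * h2 x"
    using QR[of k2] k(2) unfolding Q_def by auto
  show ?thesis
  proof (intro exI[of _ "k2 - k1"] conjI allI)
    show "k2 - k1 > 0" using k by simp
    fix y
    have e1: "u (y - int k1 + int k1) - (\<Sum>i<n. of_int (R k1 ! i) * g i (y - int k1)) = of_int m * h1 (y - int k1)"
      using h1(2) by blast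
    have e2: "u (y - int k1 + int k2) - (\<Sum>i<n. of_int (R k1 ! i) * g i (y - int k1)) = of_int m * h2 (y - int k1)"
      using h2(2) by blast
    have eq: "y - int k1 + int k2 = y + int (k2 - k1)" using k by simp
    define S where "S = (\<Sum>i<n. of_int (R k1 ! i) * g i (y - int k1))"
    have e2': "u (y + int (k2 - k1)) - S = of_int m * h2 (y - int k1)" using e2 unfolding eq S_def .
    have e1': "u y - S = of_int m * h1 (y - int k1)" using e1 unfolding S_def by simp
    have "u (y + int (k2 - k1)) - u y = (u (y + int (k2 - k1)) - S) - (u y - S)" by simp
    also have "\<dots> = of_int m * h2 (y - int k1) - of_int m * h1 (y - int k1)" by (simp only: e1' e2')
    also have "\<dots> = of_int m * (h2 (y - int k1) - h1 (y - int k1))" by (simp add: right_diff_distrib)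
    finally have "u (y + int (k2 - k1)) - u y = of_int m * (h2 (y - int k1) - h1 (y - int k1))" .
    moreover have "h2 (y - int k1) - h1 (y - int k1) \<in> Aset m"
      using U_vals[OF h1(1) vals] U_vals[OF h2(1) vals] A_diff by blast
    ultimately show "zero_mod m (u (y + int (k2 - k1)) - u y)" unfolding zero_mod_iff by blast
  qed
qed



lemma vp_ge_mono: "vp_ge p q r' \<Longrightarrow> r \<le> r' \<Longrightarrow> vp_ge p q r"
  unfolding vp_ge_def by (erule zero_mod_dvd) (rule le_imp_power_dvd)

definition goodP :: "nat \<Rightarrow> (int \<Rightarrow> rat) \<Rightarrow> nat \<Rightarrow> int \<Rightarrow> bool" where
  "goodP p w r c \<longleftrightarrow> (\<forall>R. \<exists>n. vp_ge p (w n) R \<and> [n = c] (mod int p ^ r))"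

primrec cseq :: "nat \<Rightarrow> (int \<Rightarrow> rat) \<Rightarrow> nat \<Rightarrow> int" where
  "cseq p w 0 = 0"
| "cseq p w (Suc r) = (SOME c'. 0 \<le> c' \<and> c' < int p ^ Suc r \<and> [c' = cseq p w r] (mod int p ^ r) \<and> goodP p w (Suc r) c')"

lemma good_step:
  assumes p: "p \<ge> 2" and g: "goodP p w r c"
  shows "\<exists>c'. 0 \<le> c' \<and> c' < int p ^ Suc r \<and> [c' = c] (mod int p ^ r) \<and> goodP p w (Suc r) c'"
proof (rule ccontr)
  assume nex: "\<not> ?thesis"
  define C where "C = {c'. 0 \<le> c' \<and> c' < int p ^ Suc r \<and> [c' = c] (mod int p ^ r)}"
  have fin: "finite C" unfolding C_def by (rule finite_subset[of _ "{0..<int p ^ Suc r}"]) auto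
  have "\<forall>c'\<in>C. \<exists>R. \<forall>n. \<not> (vp_ge p (w n) R \<and> [n = c'] (mod int p ^ Suc r))"
    using nex unfolding C_def goodP_def by blast
  then obtain Rf where Rf: "\<And>c'. c' \<in> C \<Longrightarrow> \<forall>n. \<not> (vp_ge p (w n) (Rf c') \<and> [n = c'] (mod int p ^ Suc r))"
    by metis
  define Rm where "Rm = (\<Sum>c'\<in>C. Rf c')"
  obtain n where n: "vp_ge p (w n) Rm" "[n = c] (mod int p ^ r)" using g unfolding goodP_def by blast
  define c' where "c' = n mod int p ^ Suc r"
  have pos: "int p ^ Suc r > 0" using p by simp
  have "[c' = n] (mod int p ^ r)"
  proof -
    have "int p ^ r dvd int p ^ Suc r" by (rule le_imp_power_dvd) simp
    then have "c' mod int p ^ r = n mod int p ^ r" unfolding c'_def by (rule mod_mod_cancel)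
    then show ?thesis by (simp add: cong_def)
  qed
  then have "c' \<in> C" unfolding C_def c'_def using pos n(2) cong_trans by auto
  moreover have "[n = c'] (mod int p ^ Suc r)" unfolding c'_def by (simp add: cong_def)
  moreover have "vp_ge p (w n) (Rf c')"
    using n(1) \<open>c' \<in> C\<close> fin by (auto intro: vp_ge_mono simp: Rm_def member_le_sum)
  ultimately show False using Rf by blast
qed

lemma bound_of_no_zero:
  assumes p: "p \<ge> 2" and nz: "\<not> has_padic_zero p w"
  shows "\<exists>r. \<forall>n. \<not> vp_ge p (w n) r"
proof (rule ccontr)
  assume "\<not> ?thesis"
  then have H: "\<forall>r. \<exists>n. vp_ge p (w n) r" by blast
  define c where "c = cseq p w"
  have inv: "goodP p w r (c r) \<and> 0 \<le> c r \<and> c r < int p ^ r" for r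
  proof (induction r)
    case 0 then show ?case using H unfolding goodP_def c_def by simp
  next
    case (Suc r)
    have "\<exists>c'. 0 \<le> c' \<and> c' < int p ^ Suc r \<and> [c' = c r] (mod int p ^ r) \<and> goodP p w (Suc r) c'"
      using good_step[OF p] Suc by blast
    then have "0 \<le> c (Suc r) \<and> c (Suc r) < int p ^ Suc r \<and> [c (Suc r) = c r] (mod int p ^ r) \<and> goodP p w (Suc r) (c (Suc r))"
      unfolding c_def cseq.simps by (rule someI_ex)
    then show ?case by blast
  qed
  have cong: "[c (Suc r) = c r] (mod int p ^ r)" for r
  proof -
    have "\<exists>c'. 0 \<le> c' \<and> c' < int p ^ Suc r \<and> [c' = c r] (mod int p ^ r) \<and> goodP p w (Suc r) c'"
      using good_step[OF p] inv by blast
    then have "0 \<le> c (Suc r) \<and> c (Suc r) < int p ^ Suc r \<and> [c (Suc r) = c r] (mod int p ^ r) \<and> goodP p w (Suc r) (c (Suc r))"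
      unfolding c_def cseq.simps by (rule someI_ex)
    then show ?thesis by blast
  qed
  have pi: "padic_int p c" unfolding padic_int_def using inv cong by blast
  define ns where "ns r = (SOME n. vp_ge p (w n) r \<and> [n = c r] (mod int p ^ r))" for r
  have "vp_ge p (w (ns r)) r \<and> [ns r = c r] (mod int p ^ r)" for r
    unfolding ns_def by (rule someI_ex) (use inv[of r] in \<open>auto simp: goodP_def\<close>)
  then have "is_padic_zero p w c" unfolding is_padic_zero_def using pi by blast
  then show False using nz unfolding has_padic_zero_def by blast
qed



lemma Zb_in_A: "values_in_Zb b u \<Longrightarrow> coprime b m \<Longrightarrow> u x \<in> Aset m"
proof -
  assume "values_in_Zb b u" "coprime b m"
  then obtain x' k where "u x = of_int x' / of_int b ^ k" unfolding values_in_Zb_def by blast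
  then have "u x = of_int x' / of_int (b ^ k)" by simp
  moreover have "coprime (b ^ k) m" using \<open>coprime b m\<close> by simp
  ultimately show ?thesis unfolding Aset_def by blast
qed

lemma S'_easy:
  assumes N: "N \<ge> 1" and ps: "\<forall>p\<in>set ps. prime p \<and> coprime (int p) b"
    and H: "\<forall>l<N. \<exists>p\<in>set ps. \<not> has_padic_zero p (\<lambda>n. u (int N * n + int l))"
  shows "u n0 \<noteq> 0"
proof
  assume z: "u n0 = 0"
  define l where "l = nat (n0 mod int N)"
  define q where "q = n0 div int N"
  have lt: "n0 mod int N < int N" "0 \<le> n0 mod int N" using N by auto
  then have "l < N" unfolding l_def by (simp add: nat_less_iff)
  have n0: "n0 = int N * q + int l" unfolding l_def q_def using N by simp
  obtain p where p: "p \<in> set ps" "\<not> has_padic_zero p (\<lambda>n. u (int N * n + int l))" using H \<open>l < N\<close> by blast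
  have "p \<ge> 2" using ps p(1) prime_ge_2_nat by blast
  define c where "c r = q mod int p ^ r" for r
  have pi: "padic_int p c" unfolding padic_int_def
  proof (intro allI conjI)
    fix r
    have pos: "int p ^ r > 0" using \<open>p \<ge> 2\<close> by simp
    show "0 \<le> c r" "c r < int p ^ r" unfolding c_def using pos by auto
    have "int p ^ r dvd int p ^ Suc r" by (rule le_imp_power_dvd) simp
    then have "q mod int p ^ Suc r mod int p ^ r = q mod int p ^ r" by (rule mod_mod_cancel)
    then show "[c (Suc r) = c r] (mod int p ^ r)" unfolding c_def by (simp add: cong_def)
  qed
  have "is_padic_zero p (\<lambda>n. u (int N * n + int l)) c"
    unfolding is_padic_zero_def
  proof (intro conjI pi exI[of _ "\<lambda>r. q"] allI impI)
    fix r :: nat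
    show "vp_ge p (u (int N * q + int l)) r" using z n0 by (simp add: vp_ge_def)
    show "[q = c r] (mod int p ^ r)" unfolding c_def by (simp add: cong_def)
  qed
  then show False using p(2) unfolding has_padic_zero_def by blast
qed

lemma iter_period:
  assumes "\<forall>x. zero_mod m (u (x + int P) - u x)"
  shows "zero_mod m (u (x + int P * j) - u x)"
proof (induction j rule: int_induct[where k=0])
  case base then show ?case by simp
next
  case (step1 j)
  have "u (x + int P * (j + 1)) - u x = (u ((x + int P * j) + int P) - u (x + int P * j)) + (u (x + int P * j) - u x)"
    by (simp add: algebra_simps)
  then show ?case using assms step1(2) zero_mod_add by metis
next
  case (step2 j)
  have "u (x + int P * (j - 1)) - u x = (u (x + int P * j) - u x) - (u ((x + int P * (j - 1)) + int P) - u (x + int P * (j - 1)))"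
    by (simp add: algebra_simps)
  then show ?case using assms step2(2) zero_mod_diff by metis
qed



lemma dir1:
  assumes Sk: "Skolem_Conjecture"
  shows "S'"
  unfolding S'_def
proof (intro allI impI)
  fix b :: int and u :: "int \<Rightarrow> rat"
  assume b: "b \<noteq> 0" and sim: "simple_LRBS u" and vz: "values_in_Zb b u"
  show "(\<forall>n. u n \<noteq> 0) \<longleftrightarrow>
        (\<exists>(N::nat) (ps::nat list). N \<ge> 1 \<and> (\<forall>p\<in>set ps. prime p \<and> coprime (int p) b) \<and>
           (\<forall>l<N. \<exists>p\<in>set ps. \<not> has_padic_zero p (\<lambda>n. u (int N * n + int l))))"
  proof
    assume nz: "\<forall>n. u n \<noteq> 0"
    obtain m where m: "m \<ge> 2" "coprime b m" "\<forall>n. \<not> zero_mod m (u n)"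
      using Sk b sim vz nz unfolding Skolem_Conjecture_def by blast
    obtain d a where lr: "0 < d" "a 0 \<noteq> 0" "lin_rec u d a"
      using sim unfolding simple_LRBS_def is_LRBS_def by blast
    have vals: "\<forall>x. u x \<in> Aset m" using Zb_in_A vz m(2) by blast
    have "m > 0" using m(1) by simp
    obtain P where P: "P > 0" "\<forall>x. zero_mod m (u (x + int P) - u x)"
      using periodic[OF lr(3) lr(1) lr(2) vals \<open>m > 0\<close>] by blast
    define ps where "ps = map nat (sorted_list_of_set (prime_factors m))"
    have setps: "set ps = nat ` prime_factors m" unfolding ps_def by simp
    have psok: "\<forall>p\<in>set ps. prime p \<and> coprime (int p) b"
    proof
      fix p assume "p \<in> set ps"
      then obtain q where q: "q \<in> prime_factors m" "p = nat q" using setps by auto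
      then have pq: "prime q" "q dvd m" by (auto simp: in_prime_factors_iff)
      then have "q \<ge> 0" by (simp add: prime_ge_0_int)
      then have ip: "int p = q" using q(2) by simp
      have "prime p" using q(2) pq(1) by simp
      moreover have "coprime q b" using m(2) pq(2) coprime_commute coprime_divisors dvd_refl by metis
      ultimately show "prime p \<and> coprime (int p) b" using ip by simp
    qed
    have key: "\<forall>l<P. \<exists>p\<in>set ps. \<not> has_padic_zero p (\<lambda>n. u (int P * n + int l))"
    proof (intro allI impI)
      fix l assume "l < P"
      obtain x k where xk: "u (int l) = of_int x / of_int b ^ k" using vz unfolding values_in_Zb_def by blast
      define y where "y = b ^ k"
      have uy: "u (int l) = of_int x / of_int y" using xk y_def by simp
      have cy: "coprime y m" using m(2) y_def by simp
      have y0: "y \<noteq> 0" using b y_def by simp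
      have "\<not> m dvd x" using m(3) uy cy unfolding zero_mod_def by blast
      then have "x \<noteq> 0" by auto
      have "\<exists>q. prime q \<and> \<not> multiplicity q m \<le> multiplicity q x"
      proof (rule ccontr)
        assume "\<not> ?thesis"
        then have "m dvd x" using m(1) by (intro multiplicity_le_imp_dvd) auto
        with \<open>\<not> m dvd x\<close> show False ..
      qed
      then obtain q where q: "prime q" "multiplicity q x < multiplicity q m" by auto
      define e where "e = multiplicity q m"
      have "e > 0" using q e_def by simp
      have "m \<noteq> 0" using m(1) by simp
      have qe_m: "q ^ e dvd m" unfolding e_def by (rule multiplicity_dvd)
      have "q dvd q ^ e" using \<open>e > 0\<close> by (simp add: dvd_power)
      then have "q dvd m" using qe_m by (rule dvd_trans)
      have nqe: "\<not> q ^ e dvd x"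
      proof
        assume "q ^ e dvd x"
        then have "e \<le> multiplicity q x" using multiplicity_geI[OF \<open>x \<noteq> 0\<close>] q(1) not_prime_unit by blast
        then show False using q(2) e_def by simp
      qed
      have "q \<ge> 0" using q(1) by (simp add: prime_ge_0_int)
      define p where "p = nat q"
      have ip: "int p = q" using \<open>q \<ge> 0\<close> p_def by simp
      have "q \<in> prime_factors m" using q(1) \<open>q dvd m\<close> \<open>m \<noteq> 0\<close> by (simp add: in_prime_factors_iff)
      then have pin: "p \<in> set ps" using setps p_def by simp
      show "\<exists>p\<in>set ps. \<not> has_padic_zero p (\<lambda>n. u (int P * n + int l))"
      proof (intro bexI[OF _ pin] notI)
        assume "has_padic_zero p (\<lambda>n. u (int P * n + int l))"
        then obtain ns where ns: "\<forall>r\<ge>1. vp_ge p (u (int P * ns r + int l)) r"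
          unfolding has_padic_zero_def is_padic_zero_def by blast
        have z1: "zero_mod (q ^ e) (u (int P * ns e + int l))"
          using ns \<open>e > 0\<close> ip unfolding vp_ge_def by auto
        have "zero_mod m (u (int l + int P * ns e) - u (int l))" by (rule iter_period[OF P(2)])
        then have z2: "zero_mod (q ^ e) (u (int P * ns e + int l) - u (int l))"
          using qe_m zero_mod_dvd by (simp add: add.commute)
        have "zero_mod (q ^ e) (u (int P * ns e + int l) - (u (int P * ns e + int l) - u (int l)))"
          by (rule zero_mod_diff[OF z1 z2])
        then have "zero_mod (q ^ e) (u (int l))" by simp
        moreover have "coprime y (q ^ e)" using cy qe_m coprime_divisors dvd_refl by blast
        ultimately have "q ^ e dvd x" using zero_mod_rep uy y0 by blast
        then show False using nqe by blast
      qed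
    qed
    show "\<exists>(N::nat) (ps::nat list). N \<ge> 1 \<and> (\<forall>p\<in>set ps. prime p \<and> coprime (int p) b) \<and>
           (\<forall>l<N. \<exists>p\<in>set ps. \<not> has_padic_zero p (\<lambda>n. u (int N * n + int l)))"
      using P(1) psok key by (intro exI[of _ P] exI[of _ ps]) auto
  next
    assume "\<exists>(N::nat) (ps::nat list). N \<ge> 1 \<and> (\<forall>p\<in>set ps. prime p \<and> coprime (int p) b) \<and>
           (\<forall>l<N. \<exists>p\<in>set ps. \<not> has_padic_zero p (\<lambda>n. u (int N * n + int l)))"
    then obtain N :: nat and ps :: "nat list" where H: "N \<ge> 1" "\<forall>p\<in>set ps. prime p \<and> coprime (int p) b"
      "\<forall>l<N. \<exists>p\<in>set ps. \<not> has_padic_zero p (\<lambda>n. u (int N * n + int l))" by blast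
    show "\<forall>n. u n \<noteq> 0" using S'_easy[OF H] by blast
  qed
qed



lemma dir2:
  assumes S: "S'"
  shows "Skolem_Conjecture"
  unfolding Skolem_Conjecture_def
proof (intro allI impI)
  fix b :: int and u :: "int \<Rightarrow> rat"
  assume b: "b \<noteq> 0" and sim: "simple_LRBS u" and vz: "values_in_Zb b u"
  show "(\<forall>n. u n \<noteq> 0) \<longleftrightarrow> (\<exists>m::int. m \<ge> 2 \<and> coprime b m \<and> (\<forall>n. \<not> zero_mod m (u n)))"
  proof
    assume nz: "\<forall>n. u n \<noteq> 0"
    have "\<exists>(N::nat) (ps::nat list). N \<ge> 1 \<and> (\<forall>p\<in>set ps. prime p \<and> coprime (int p) b) \<and>
           (\<forall>l<N. \<exists>p\<in>set ps. \<not> has_padic_zero p (\<lambda>n. u (int N * n + int l)))"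
      using S b sim vz nz unfolding S'_def by blast
    then obtain N :: nat and ps :: "nat list" where H: "N \<ge> 1" "\<forall>p\<in>set ps. prime p \<and> coprime (int p) b"
      "\<forall>l<N. \<exists>p\<in>set ps. \<not> has_padic_zero p (\<lambda>n. u (int N * n + int l))" by blast
    have "\<forall>l. \<exists>x. l < N \<longrightarrow> (fst x \<in> set ps \<and> (\<forall>n. \<not> vp_ge (fst x) (u (int N * n + int l)) (snd x)))"
    proof (intro allI)
      fix l show "\<exists>x. l < N \<longrightarrow> (fst x \<in> set ps \<and> (\<forall>n. \<not> vp_ge (fst x) (u (int N * n + int l)) (snd x)))"
      proof (cases "l < N")
        case True
        then obtain p where p: "p \<in> set ps" "\<not> has_padic_zero p (\<lambda>n. u (int N * n + int l))" using H(3) by blast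
        have "p \<ge> 2" using H(2) p(1) prime_ge_2_nat by blast
        obtain r where "\<forall>n. \<not> vp_ge p (u (int N * n + int l)) r" using bound_of_no_zero[OF \<open>p \<ge> 2\<close> p(2)] by blast
        then show ?thesis using p(1) by (intro exI[of _ "(p, r)"]) simp
      next
        case False then show ?thesis by simp
      qed
    qed
    from choice[OF this] obtain f where f0: "\<forall>l. l < N \<longrightarrow> (fst (f l) \<in> set ps \<and> (\<forall>n. \<not> vp_ge (fst (f l)) (u (int N * n + int l)) (snd (f l))))"
      by (rule exE)
    note f = f0[rule_format]
    define R where "R = (\<Sum>l<N. snd (f l)) + 1"
    define m where "m = (\<Prod>p\<in>set ps. int p ^ R)"
    have ppos: "p \<in> set ps \<Longrightarrow> int p > 0" for p using H(2) prime_gt_0_nat by force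
    have mpos: "m > 0" unfolding m_def using ppos by (intro prod_pos) simp
    have dvdm: "p \<in> set ps \<Longrightarrow> int p ^ R dvd m" for p unfolding m_def by (rule dvd_prodI) simp_all
    have "0 < N" using H(1) by simp
    then have p0: "fst (f 0) \<in> set ps" using f by blast
    then have "fst (f 0) \<ge> 2" using H(2) prime_ge_2_nat by blast
    then have "int (fst (f 0)) ^ 1 \<le> int (fst (f 0)) ^ R" unfolding R_def by (intro power_increasing) auto
    then have i1: "int (fst (f 0)) \<le> int (fst (f 0)) ^ R" by (simp only: power_one_right)
    have i2: "int (fst (f 0)) \<ge> 2" using \<open>fst (f 0) \<ge> 2\<close> by simp
    have "int (fst (f 0)) ^ R \<ge> 2" using i1 i2 by linarith
    moreover have "int (fst (f 0)) ^ R \<le> m" using dvdm[OF p0] mpos by (rule zdvd_imp_le)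
    ultimately have m2: "m \<ge> 2" by simp
    have cop: "coprime b m" unfolding m_def
    proof (rule prod_coprime_right)
      fix p assume "p \<in> set ps"
      then have "coprime (int p) b" using H(2) by blast
      then show "coprime b (int p ^ R)" by (simp add: coprime_commute)
    qed
    have "\<forall>n. \<not> zero_mod m (u n)"
    proof (intro allI notI)
      fix n assume zm: "zero_mod m (u n)"
      define l where "l = nat (n mod int N)"
      define q where "q = n div int N"
      have lt: "n mod int N < int N" "0 \<le> n mod int N" using H(1) by auto
      then have "l < N" unfolding l_def by (simp add: nat_less_iff)
      have n0: "n = int N * q + int l" unfolding l_def q_def using H(1) by simp
      have fl: "fst (f l) \<in> set ps" "\<forall>n. \<not> vp_ge (fst (f l)) (u (int N * n + int l)) (snd (f l))"
        using f \<open>l < N\<close> by auto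
      have "snd (f l) \<le> (\<Sum>l<N. snd (f l))" using \<open>l < N\<close> by (intro member_le_sum) auto
      then have "snd (f l) \<le> R" unfolding R_def by simp
      then have "int (fst (f l)) ^ snd (f l) dvd int (fst (f l)) ^ R" by (rule le_imp_power_dvd)
      then have "int (fst (f l)) ^ snd (f l) dvd m" using dvdm[OF fl(1)] by (rule dvd_trans)
      then have "zero_mod (int (fst (f l)) ^ snd (f l)) (u n)" using zm zero_mod_dvd by blast
      then have "vp_ge (fst (f l)) (u (int N * q + int l)) (snd (f l))" unfolding vp_ge_def using n0 by simp
      then show False using fl(2) by blast
    qed
    then show "\<exists>m::int. m \<ge> 2 \<and> coprime b m \<and> (\<forall>n. \<not> zero_mod m (u n))" using m2 cop by blast
  next
    assume "\<exists>m::int. m \<ge> 2 \<and> coprime b m \<and> (\<forall>n. \<not> zero_mod m (u n))"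
    then obtain m :: int where "\<forall>n. \<not> zero_mod m (u n)" by blast
    then show "\<forall>n. u n \<noteq> 0" by (metis zero_mod_0)
  qed
qed

theorem mainTheorem6:
  shows "Skolem_Conjecture \<longleftrightarrow> S'"
  using dir1 dir2 by blast

end
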